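(* Let $G=(V,E)$ be a $d$-regular graph on $n$ vertices and let $0<\varepsilon<1/3$. Assume $$(d+1)(d^2+1)\cdot 2\exp\!\left(-\tfrac13\varepsilon^2\left\lfloor \tfrac{n}{d^2+1}\right\rfloor\cdot\tfrac{1}{d+1}\right)<1.$$ Then there is a spanning subgraph $H$ of $G$ such that for every integer $0\le k\le d$, $$\left|m(H,k)-\frac{n}{d+1}\right|\le \varepsilon\frac{n}{d+1}.$$
   Context: All graphs are finite and simple. For a graph $G$ and integer $k\ge0$, $m(G,k)$ is the number of vertices of degree exactly $k$ in $G$. A spanning subgraph has the same vertex set as $G$. *)

theory Defs
  imports "HOL-Analysis.Analysis"
begin

definition simple_graph :: "'a set \<Rightarrow> 'a set set \<Rightarrow> bool" where
  "simple_graph V E \<longleftrightarrow> finite V \<and> (\<forall>e\<in>E. e \<subseteq> V \<and> card e = 2)"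

definition degree :: "'a set set \<Rightarrow> 'a \<Rightarrow> nat" where
  "degree E v = card {e\<in>E. v \<in> e}"

definition regular :: "'a set \<Rightarrow> 'a set set \<Rightarrow> nat \<Rightarrow> bool" where
  "regular V E d \<longleftrightarrow> (\<forall>v\<in>V. degree E v = d)"

definition mdeg :: "'a set \<Rightarrow> 'a set set \<Rightarrow> nat \<Rightarrow> nat" where
  "mdeg V E k = card {v\<in>V. degree E v = k}"

definition spanning_subgraph :: "'a set \<Rightarrow> 'a set set \<Rightarrow> 'a set set \<Rightarrow> bool" where
  "spanning_subgraph V E F \<longleftrightarrow> F \<subseteq> E"

end

theory Submission
  imports Defs "HOL-Probability.Probability"
begin

definition nbr :: "'a set set \<Rightarrow> 'a \<Rightarrow> 'a set" where
  "nbr E v = {u. {u,v} \<in> E}"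

lemma degree_nbr:
  assumes "simple_graph V E" "F \<subseteq> E"
  shows "degree F v = card (nbr F v)"
proof -
  have bij: "bij_betw (\<lambda>u. {u,v}) (nbr F v) {e\<in>F. v \<in> e}"
  proof (rule bij_betwI')
    fix x y assume "x \<in> nbr F v" "y \<in> nbr F v"
    show "({x, v} = {y, v}) = (x = y)"
    proof
      assume h: "{x, v} = {y, v}"
      have "card {x,v} = 2" using \<open>x \<in> nbr F v\<close> assms unfolding nbr_def simple_graph_def by auto
      hence "x \<noteq> v" by auto
      thus "x = y" using h by (metis doubleton_eq_iff)
    qed simp
  next
    fix x assume "x \<in> nbr F v" thus "{x, v} \<in> {e \<in> F. v \<in> e}" by (auto simp: nbr_def)
  next
    fix e assume e: "e \<in> {e \<in> F. v \<in> e}"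
    hence "card e = 2" using assms unfolding simple_graph_def by auto
    then obtain a b where ab: "e = {a,b}" "a \<noteq> b" by (meson card_2_iff)
    show "\<exists>x\<in>nbr F v. e = {x, v}"
    proof (cases "a = v")
      case True thus ?thesis using ab e by (intro bexI[of _ b]) (auto simp: nbr_def insert_commute)
    next
      case False hence "b = v" using ab e by auto
      thus ?thesis using ab e by (intro bexI[of _ a]) (auto simp: nbr_def)
    qed
  qed
  show ?thesis unfolding degree_def using bij_betw_same_card[OF bij] by simp
qed

lemma nbr_props:
  assumes "simple_graph V E"
  shows "nbr E v \<subseteq> V" "v \<notin> nbr E v" "finite (nbr E v)"
    "u \<in> nbr E v \<longleftrightarrow> v \<in> nbr E u"
proof -
  show 1: "nbr E v \<subseteq> V" using assms unfolding simple_graph_def nbr_def by auto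
  show "v \<notin> nbr E v" using assms unfolding simple_graph_def nbr_def by force
  show "finite (nbr E v)" using 1 assms finite_subset unfolding simple_graph_def by auto
  show "u \<in> nbr E v \<longleftrightarrow> v \<in> nbr E u" by (simp add: nbr_def insert_commute)
qed

lemma card_nbr:
  assumes "simple_graph V E" "regular V E d" "v \<in> V"
  shows "card (nbr E v) = d"
  using degree_nbr[OF assms(1) order_refl, of v] assms(2,3) unfolding regular_def by simp

definition cl :: "'a set set \<Rightarrow> 'a \<Rightarrow> 'a set" where
  "cl E v = insert v (nbr E v)"

lemma greedy_coloring:
  assumes "finite V" "\<And>u w. R u w \<Longrightarrow> R w u"
    "\<And>v. v \<in> V \<Longrightarrow> card {w\<in>V. w \<noteq> v \<and> R v w} \<le> D"
  shows "\<exists>cf. (\<forall>v\<in>V. cf v < Suc D) \<and> (\<forall>u\<in>V. \<forall>w\<in>V. u \<noteq> w \<and> R u w \<longrightarrow> cf u \<noteq> cf w)"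
  using assms(1,3)
proof (induction V rule: finite_induct)
  case empty thus ?case by auto
next
  case (insert x V)
  have hV: "card {w\<in>V. w \<noteq> v \<and> R v w} \<le> D" if v: "v \<in> V" for v
  proof -
    have "card {w\<in>V. w \<noteq> v \<and> R v w} \<le> card {w\<in>insert x V. w \<noteq> v \<and> R v w}"
      by (rule card_mono) (use insert.hyps insert.prems in auto)
    also have "\<dots> \<le> D" using insert.prems v by auto
    finally show ?thesis .
  qed
  have "\<exists>cf. (\<forall>v\<in>V. cf v < Suc D) \<and> (\<forall>u\<in>V. \<forall>w\<in>V. u \<noteq> w \<and> R u w \<longrightarrow> cf u \<noteq> cf w)"
    by (rule insert.IH) (rule hV)
  then obtain cf where cf: "\<forall>v\<in>V. cf v < Suc D"
    "\<forall>u\<in>V. \<forall>w\<in>V. u \<noteq> w \<and> R u w \<longrightarrow> cf u \<noteq> cf w" by (elim exE conjE)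
  let ?B = "cf ` {w\<in>V. w \<noteq> x \<and> R x w}"
  have "card ?B \<le> card {w\<in>V. w \<noteq> x \<and> R x w}" by (rule card_image_le) (use insert.hyps insert.prems in auto)
  also have "\<dots> \<le> card {w\<in>insert x V. w \<noteq> x \<and> R x w}" by (rule card_mono) (use insert.hyps insert.prems in auto)
  also have "\<dots> \<le> D" using insert.prems by auto
  finally have "card ?B < card {..<Suc D}" by simp
  note cB = this
  have "\<not> {..<Suc D} \<subseteq> ?B"
  proof
    assume "{..<Suc D} \<subseteq> ?B"
    hence "card {..<Suc D} \<le> card ?B" by (intro card_mono) (use insert.hyps insert.prems in auto)
    thus False using cB by simp
  qed
  then obtain c where c: "c \<in> {..<Suc D}" "c \<notin> ?B" by blast
  define cf' where "cf' = cf(x := c)"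
  show ?case
  proof (intro exI[of _ cf'] conjI ballI impI)
    fix v assume "v \<in> insert x V" thus "cf' v < Suc D"
      using cf(1) c(1) unfolding cf'_def by (cases "v = x") auto
  next
    fix u w assume uw: "u \<in> insert x V" "w \<in> insert x V" "u \<noteq> w \<and> R u w"
    show "cf' u \<noteq> cf' w"
    proof (cases "u = x")
      case True
      hence "w \<in> V" "w \<noteq> x" "R x w" using uw by auto
      hence "cf w \<in> ?B" by blast
      thus ?thesis using c(2) True \<open>w \<noteq> x\<close> unfolding cf'_def by auto
    next
      case False note u = this
      show ?thesis
      proof (cases "w = x")
        case True
        hence "u \<in> V" "u \<noteq> x" "R x u" using uw u assms(2) by auto
        hence "cf u \<in> ?B" by blast
        thus ?thesis using c(2) True \<open>u \<noteq> x\<close> unfolding cf'_def by auto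
      next
        case False
        have "u \<in> V" "w \<in> V" using uw u False by auto
        hence "cf u \<noteq> cf w" using cf(2) uw by blast
        thus ?thesis using u False unfolding cf'_def by auto
      qed
    qed
  qed
qed

lemma dist2_coloring:
  assumes G: "simple_graph V E" "regular V E d"
  shows "\<exists>cf. (\<forall>v\<in>V. cf v < d^2+1) \<and>
     (\<forall>u\<in>V. \<forall>w\<in>V. u \<noteq> w \<and> cf u = cf w \<longrightarrow> cl E u \<inter> cl E w = {})"
proof -
  define R where "R u w \<longleftrightarrow> cl E u \<inter> cl E w \<noteq> {}" for u w
  have fin: "finite V" using G unfolding simple_graph_def by auto
  have "card {w\<in>V. w \<noteq> v \<and> R v w} \<le> d^2" if v: "v \<in> V" for v
  proof -
    have sub: "{w\<in>V. w \<noteq> v \<and> R v w} \<subseteq> nbr E v \<union> (\<Union>u\<in>nbr E v. nbr E u - {v})"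
    proof
      fix w assume "w \<in> {w\<in>V. w \<noteq> v \<and> R v w}"
      then obtain z where w: "w \<noteq> v" "z \<in> cl E v" "z \<in> cl E w" by (auto simp: R_def)
      show "w \<in> nbr E v \<union> (\<Union>u\<in>nbr E v. nbr E u - {v})"
        using w nbr_props(4)[OF G(1)] unfolding cl_def by auto
    qed
    have "card {w\<in>V. w \<noteq> v \<and> R v w} \<le> card (nbr E v \<union> (\<Union>u\<in>nbr E v. nbr E u - {v}))"
      by (rule card_mono[OF _ sub]) (use nbr_props[OF G(1)] in auto)
    also have "\<dots> \<le> card (nbr E v) + card (\<Union>u\<in>nbr E v. nbr E u - {v})" by (rule card_Un_le)
    also have "card (\<Union>u\<in>nbr E v. nbr E u - {v}) \<le> (\<Sum>u\<in>nbr E v. card (nbr E u - {v}))"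
      by (rule card_UN_le) (use nbr_props[OF G(1)] in auto)
    also have "(\<Sum>u\<in>nbr E v. card (nbr E u - {v})) = (\<Sum>u\<in>nbr E v. d - 1)"
    proof (rule sum.cong[OF refl])
      fix u assume u: "u \<in> nbr E v"
      hence "u \<in> V" "v \<in> nbr E u" using nbr_props[OF G(1)] by auto
      thus "card (nbr E u - {v}) = d - 1" using card_nbr[OF G] nbr_props[OF G(1)] by simp
    qed
    also have "card (nbr E v) + (\<Sum>u\<in>nbr E v. d - 1) = d + d * (d - 1)"
      using card_nbr[OF G v] by simp
    finally have "card {w\<in>V. w \<noteq> v \<and> R v w} \<le> d + d * (d - 1)" by simp
    also have "d + d * (d - 1) \<le> d^2" by (cases d) (auto simp: power2_eq_square)
    finally show ?thesis .
  qed
  note cardR = this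
  have symR: "\<And>u w. R u w \<Longrightarrow> R w u" by (auto simp: R_def)
  obtain cf where cf: "\<forall>v\<in>V. cf v < Suc (d^2)"
     "\<forall>u\<in>V. \<forall>w\<in>V. u \<noteq> w \<and> R u w \<longrightarrow> cf u \<noteq> cf w"
    using greedy_coloring[of V R "d^2", OF fin symR cardR] by metis
  show ?thesis
  proof (intro exI[of _ cf] conjI ballI impI)
    fix v assume "v\<in>V" thus "cf v < d^2+1" using cf(1) by simp
  next
    fix u w assume "u\<in>V" "w\<in>V" "u \<noteq> w \<and> cf u = cf w"
    thus "cl E u \<inter> cl E w = {}" using cf(2) unfolding R_def by blast
  qed
qed

lemma exp_pade:
  fixes s :: real assumes "0 \<le> s" "s < 2"
  shows "exp s \<le> (2+s)/(2-s)"
proof -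
  define g where "g x = ln (2+x) - ln (2-x) - x" for x :: real
  have "g 0 \<le> g s"
  proof (rule DERIV_nonneg_imp_nondecreasing[OF assms(1)])
    fix x :: real assume x: "0 \<le> x" "x \<le> s"
    have "DERIV g x :> (1/(2+x) - (-1)/(2-x) - 1)"
      unfolding g_def using x assms
      by (auto intro!: derivative_eq_intros)
    moreover have "1/(2+x) - (-1)/(2-x) - 1 \<ge> 0"
    proof -
      have p: "2 - x > 0" "2 + x > 0" using x assms by auto
      have e: "1/(2+x) - (-1)/(2-x) = 4/((2+x)*(2-x))" using p by (simp add: field_simps)
      have le4: "(2+x)*(2-x) \<le> 4" by (simp add: algebra_simps)
      have pos: "0 < (2+x)*(2-x)" using p by simp
      have "4/((2+x)*(2-x)) \<ge> 1" using le_divide_eq_1_pos[OF pos, of 4] le4 by simp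
      thus ?thesis using e by simp
    qed
    ultimately show "\<exists>y. DERIV g x :> y \<and> y \<ge> 0" by blast
  qed
  hence "s \<le> ln ((2+s)/(2-s))" using assms by (simp add: g_def ln_div)
  thus ?thesis using assms by (metis exp_le_cancel_iff exp_ln divide_pos_pos add_pos_nonneg diff_gt_0_iff_gt zero_less_numeral)
qed

lemma exp_neg_quad:
  fixes s :: real assumes "s \<le> 0"
  shows "exp s \<le> 1 + s + s^2/2"
proof -
  define g where "g x = 1 + x + x^2/2 - exp x" for x :: real
  have "g s \<ge> g 0"
  proof (rule DERIV_nonpos_imp_nonincreasing[OF assms])
    fix x :: real assume x: "s \<le> x" "x \<le> 0"
    have "DERIV g x :> (1 + x - exp x)"
      unfolding g_def by (auto intro!: derivative_eq_intros simp: power2_eq_square)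
    moreover have "1 + x - exp x \<le> 0" using exp_ge_add_one_self[of x] by simp
    ultimately show "\<exists>y. DERIV g x :> y \<and> y \<le> 0" by blast
  qed
  thus ?thesis by (simp add: g_def)
qed

lemma exp_bernstein:
  fixes s :: real assumes "\<bar>s\<bar> < 2"
  shows "exp s - 1 - s \<le> s^2 / (2 - \<bar>s\<bar>)"
proof (cases "s \<ge> 0")
  case True
  have "exp s - 1 - s \<le> (2+s)/(2-s) - 1 - s" using exp_pade[OF True] assms True by simp
  also have "\<dots> = s^2/(2-s)" using assms True by (simp add: field_simps power2_eq_square)
  finally show ?thesis using True by simp
next
  case False
  have "exp s - 1 - s \<le> s^2/2" using exp_neg_quad[of s] False by simp
  also have "\<dots> \<le> s^2/(2 - \<bar>s\<bar>)"
    using assms by (intro divide_left_mono) auto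
  finally show ?thesis .
qed

lemma card_filter_sum:
  assumes "finite C"
  shows "real (card {v\<in>C. P v}) = (\<Sum>v\<in>C. of_bool (P v))"
proof -
  have "(\<Sum>v\<in>C. of_bool (P v) :: real) = (\<Sum>v\<in>{v\<in>C. P v}. 1)"
    using assms by (simp add: sum.inter_filter[symmetric] of_bool_def sum.If_cases)
  thus ?thesis by simp
qed

lemma bern_tail:
  fixes N :: "'b pmf" and C :: "'v set" and Y :: "'v \<Rightarrow> 'b \<Rightarrow> bool" and c t L \<mu> :: real
  assumes fin: "finite C"
    and ind: "prob_space.indep_vars (measure_pmf N) (\<lambda>_. count_space UNIV) Y C"
    and c: "c = 1 \<or> c = -1"
    and t: "t > 0" "L * (2*\<mu> + t) \<le> t^2"
    and \<mu>: "\<mu> = (\<Sum>v\<in>C. measure_pmf.prob N {x. Y v x})"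
  shows "measure_pmf.prob N {x. t \<le> c * (real (card {v\<in>C. Y v x}) - \<mu>)} \<le> exp (-L)"
proof -
  interpret P: prob_space "measure_pmf N" by (rule measure_pmf.prob_space_axioms)
  define p where "p v = measure_pmf.prob N {x. Y v x}" for v
  have \<mu>0: "\<mu> \<ge> 0" using \<mu> by (simp add: sum_nonneg)
  define lam where "lam = t/(\<mu>+t)"
  define s where "s = c * lam"
  have lam: "0 < lam" "lam \<le> 1" using t \<mu>0 by (auto simp: lam_def field_simps)
  have abs_s: "\<bar>s\<bar> = lam" using c lam by (auto simp: s_def)
  define X where "X x = real (card {v\<in>C. Y v x})" for x
  have Xs: "X x = (\<Sum>v\<in>C. of_bool (Y v x))" for x
    unfolding X_def by (rule card_filter_sum[OF fin])
  have expX: "exp (s * X x) = (\<Prod>v\<in>C. exp (s * of_bool (Y v x)))" for x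
    unfolding Xs by (simp only: sum_distrib_left exp_sum[OF fin])
  have indep2: "prob_space.indep_vars (measure_pmf N) (\<lambda>_. borel) (\<lambda>v x. exp (s * of_bool (Y v x))) C"
    by (rule prob_space.indep_vars_compose2[OF measure_pmf.prob_space_axioms ind]) auto
  have intg: "integrable (measure_pmf N) (\<lambda>x. exp (s * of_bool (Y v x)))" for v
    by (rule measure_pmf.integrable_const_bound[where B="exp s + 1"]) auto
  have E_prod: "measure_pmf.expectation N (\<lambda>x. \<Prod>v\<in>C. exp (s * of_bool (Y v x))) =
      (\<Prod>v\<in>C. measure_pmf.expectation N (\<lambda>x. exp (s * of_bool (Y v x))))"
    by (rule prob_space.indep_vars_lebesgue_integral[OF measure_pmf.prob_space_axioms fin indep2 intg])
  have E_single: "measure_pmf.expectation N (\<lambda>x. exp (s * of_bool (Y v x))) = 1 + p v * (exp s - 1)" for v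
  proof -
    have "(\<lambda>x. exp (s * of_bool (Y v x))) = (\<lambda>x. 1 + (exp s - 1) * indicator {x. Y v x} x)"
      by (auto simp: indicator_def)
    hence "measure_pmf.expectation N (\<lambda>x. exp (s * of_bool (Y v x))) =
       measure_pmf.expectation N (\<lambda>x. 1 + (exp s - 1) * indicator {x. Y v x} x)" by simp
    also have "\<dots> = 1 + (exp s - 1) * p v"
    proof -
      have "integrable (measure_pmf N) (indicator {x. Y v x} :: _ \<Rightarrow> real)"
        by (rule measure_pmf.integrable_const_bound[where B=1]) (auto simp: indicator_def)
      thus ?thesis by (subst Bochner_Integration.integral_add) (auto simp: p_def)
    qed
    finally show ?thesis by simp
  qed
  have E_bound: "measure_pmf.expectation N (\<lambda>x. exp (s * X x)) \<le> exp (\<mu> * (exp s - 1))"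
  proof -
    have "measure_pmf.expectation N (\<lambda>x. exp (s * X x)) = (\<Prod>v\<in>C. 1 + p v * (exp s - 1))"
      by (simp add: expX E_prod E_single)
    also have "\<dots> \<le> (\<Prod>v\<in>C. exp (p v * (exp s - 1)))"
    proof (rule prod_mono)
      fix v assume "v \<in> C"
      have "0 \<le> 1 + p v * (exp s - 1)"
      proof -
        have "0 \<le> p v" "p v \<le> 1" by (auto simp: p_def)
        moreover have "exp s > 0" by simp
        ultimately have "p v * (exp s - 1) \<ge> -1"
        proof (cases "exp s \<ge> 1")
          case True
          hence "0 \<le> p v * (exp s - 1)" using \<open>0 \<le> p v\<close> by (intro mult_nonneg_nonneg) auto
          thus ?thesis by linarith
        next
          case False
          have "0 \<le> p v * exp s" using \<open>0 \<le> p v\<close> by simp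
          thus ?thesis using \<open>p v \<le> 1\<close> unfolding right_diff_distrib by linarith
        qed
        thus ?thesis by simp
      qed
      thus "0 \<le> 1 + p v * (exp s - 1) \<and> 1 + p v * (exp s - 1) \<le> exp (p v * (exp s - 1))"
        using exp_ge_add_one_self by simp
    qed
    also have "\<dots> = exp (\<mu> * (exp s - 1))"
      by (simp add: exp_sum[OF fin, symmetric] \<mu> p_def sum_distrib_right)
    finally show ?thesis .
  qed
  define K where "K = exp (s * \<mu> + lam * t)"
  have K: "K > 0" by (simp add: K_def)
  have sub: "{x. t \<le> c * (real (card {v\<in>C. Y v x}) - \<mu>)} \<subseteq> {x\<in>space (measure_pmf N). K \<le> exp (s * X x)}"
  proof
    fix x assume "x \<in> {x. t \<le> c * (real (card {v\<in>C. Y v x}) - \<mu>)}"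
    hence "t \<le> c * (X x - \<mu>)" by (simp add: X_def)
    hence "lam * t \<le> lam * (c * (X x - \<mu>))" using lam by (intro mult_left_mono) auto
    also have "\<dots> = s * X x - s * \<mu>" by (simp add: s_def algebra_simps)
    finally show "x \<in> {x\<in>space (measure_pmf N). K \<le> exp (s * X x)}" by (simp add: K_def)
  qed
  have "measure_pmf.prob N {x. t \<le> c * (real (card {v\<in>C. Y v x}) - \<mu>)}
      \<le> measure_pmf.prob N {x\<in>space (measure_pmf N). K \<le> exp (s * X x)}"
    by (rule measure_pmf.finite_measure_mono[OF sub]) simp
  also have "\<dots> \<le> measure_pmf.expectation N (\<lambda>x. exp (s * X x)) / K"
  proof (rule integral_Markov_inequality_measure[where A=UNIV])
    have bnd: "s * X x \<le> \<bar>s\<bar> * real (card C)" for x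
    proof -
      have X1: "X x \<le> real (card C)" "0 \<le> X x" by (auto simp: X_def intro: card_mono fin)
      have "s * X x \<le> \<bar>s\<bar> * X x" using X1 by (intro mult_right_mono) auto
      also have "\<dots> \<le> \<bar>s\<bar> * real (card C)" using X1 by (intro mult_left_mono) auto
      finally show ?thesis .
    qed
    show "integrable (measure_pmf N) (\<lambda>x. exp (s * X x))"
      by (rule measure_pmf.integrable_const_bound[where B="exp (\<bar>s\<bar> * real (card C))"])
         (use bnd in auto)
  qed (use K in auto)
  also have "\<dots> \<le> exp (\<mu> * (exp s - 1)) / K"
    by (rule divide_right_mono[OF E_bound]) (use K in simp)
  also have "\<dots> = exp (\<mu> * (exp s - 1 - s) - lam * t)"
    by (simp add: K_def exp_diff[symmetric] algebra_simps)
  also have "\<dots> \<le> exp (\<mu> * (s^2 / (2 - \<bar>s\<bar>)) - lam * t)"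
  proof -
    have "exp s - 1 - s \<le> s^2 / (2 - \<bar>s\<bar>)" using exp_bernstein[of s] abs_s lam by simp
    hence "\<mu> * (exp s - 1 - s) \<le> \<mu> * (s^2 / (2 - \<bar>s\<bar>))" using \<mu>0 by (rule mult_left_mono)
    thus ?thesis by simp
  qed
  also have "\<mu> * (s^2 / (2 - \<bar>s\<bar>)) - lam * t = - (t^2 / (2*\<mu> + t))"
  proof -
    have s2: "s^2 = lam^2" using abs_s by (metis power2_abs)
    have h1: "\<mu> + t > 0" "2*\<mu> + t > 0" using t \<mu>0 by auto
    have e1: "2 - lam = (2*\<mu>+t)/(\<mu>+t)" using h1 by (simp add: lam_def field_simps)
    have e2: "\<mu> * (lam^2/(2-lam)) = \<mu> * t^2/((\<mu>+t)*(2*\<mu>+t))"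
    proof -
      obtain a b where ab: "a = \<mu>+t" "b = 2*\<mu>+t" by blast
      have "a > 0" "b > 0" using h1 ab by auto
      hence q: "(t/a)^2/(b/a) = t^2/(a*b)" by (simp add: field_simps power2_eq_square)
      have l1: "2 - lam = b/a" using e1 ab by simp
      have l2: "lam = t/a" using ab by (simp add: lam_def)
      have "lam^2/(2-lam) = lam^2/(b/a)" by (simp only: l1)
      also have "\<dots> = (t/a)^2/(b/a)" by (simp only: l2)
      finally have "lam^2/(2-lam) = t^2/(a*b)" using q by simp
      thus ?thesis using ab by simp
    qed
    have e3: "lam * t = t^2/(\<mu>+t)" by (simp add: lam_def power2_eq_square)
    have e4: "\<mu> * t^2/((\<mu>+t)*(2*\<mu>+t)) - t^2/(\<mu>+t) = - (t^2/(2*\<mu>+t))"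
    proof -
      have "t^2/(\<mu>+t) = t^2 * (2*\<mu>+t) /((\<mu>+t)*(2*\<mu>+t))" using h1 by simp
      hence "\<mu> * t^2/((\<mu>+t)*(2*\<mu>+t)) - t^2/(\<mu>+t) = (\<mu> * t^2 - t^2 * (2*\<mu>+t))/((\<mu>+t)*(2*\<mu>+t))"
        by (simp add: diff_divide_distrib)
      also have "\<mu> * t^2 - t^2 * (2*\<mu>+t) = - (t^2 * (\<mu>+t))" by (simp add: algebra_simps)
      also have "- (t^2 * (\<mu>+t)) / ((\<mu>+t)*(2*\<mu>+t)) = - (t^2/(2*\<mu>+t))" using h1 by simp
      finally show ?thesis .
    qed
    show ?thesis unfolding s2 abs_s using e2 e3 e4 by simp
  qed
  also have "exp (- (t^2 / (2*\<mu> + t))) \<le> exp (-L)"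
  proof -
    have "2*\<mu> + t > 0" using t \<mu>0 by auto
    hence "L \<le> t^2 / (2*\<mu> + t)" using t(2) by (simp add: field_simps)
    thus ?thesis by simp
  qed
  finally show ?thesis .
qed

definition rk :: "'a set \<Rightarrow> ('a \<Rightarrow> nat) \<Rightarrow> 'a \<Rightarrow> nat" where
  "rk S w i = card {u\<in>S-{i}. w u < w i}"

lemma rk_le: "finite S \<Longrightarrow> i \<in> S \<Longrightarrow> rk S w i < card S"
proof -
  assume "finite S" "i \<in> S"
  hence "rk S w i \<le> card (S - {i})" unfolding rk_def by (intro card_mono) auto
  also have "\<dots> < card S" using \<open>finite S\<close> \<open>i \<in> S\<close> by (rule card_Diff1_less)
  finally show ?thesis .
qed

lemma rk_inj:
  assumes "finite S" "inj_on w S"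
  shows "inj_on (rk S w) S"
proof (rule inj_onI, rule ccontr)
  fix i j assume ij: "i \<in> S" "j \<in> S" "rk S w i = rk S w j" "i \<noteq> j"
  have lt: "rk S w a < rk S w b" if ab: "a \<in> S" "b \<in> S" "w a < w b" for a b
  proof -
    have "{u\<in>S-{a}. w u < w a} \<subset> {u\<in>S-{b}. w u < w b}"
    proof
      show "{u\<in>S-{a}. w u < w a} \<subseteq> {u\<in>S-{b}. w u < w b}" using ab by auto
      have "a \<in> {u\<in>S-{b}. w u < w b}" "a \<notin> {u\<in>S-{a}. w u < w a}" using ab by auto
      thus "{u\<in>S-{a}. w u < w a} \<noteq> {u\<in>S-{b}. w u < w b}" by blast
    qed
    thus ?thesis unfolding rk_def using assms(1) by (intro psubset_card_mono) auto
  qed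
  have "w i \<noteq> w j" using assms(2) ij unfolding inj_on_def by blast
  hence "w i < w j \<or> w j < w i" by arith
  thus False using lt ij by fastforce
qed

lemma rk_unique:
  assumes "finite S" "inj_on w S" "k < card S"
  shows "card {i\<in>S. rk S w i = k} = 1"
proof -
  have img: "rk S w ` S = {..<card S}"
  proof (rule card_subset_eq)
    show "rk S w ` S \<subseteq> {..<card S}" using rk_le assms(1) by auto
    show "card (rk S w ` S) = card {..<card S}" using card_image[OF rk_inj[OF assms(1,2)]] by simp
  qed simp
  then obtain i where i: "i \<in> S" "rk S w i = k" using assms(3) by (metis imageE lessThan_iff)
  have "{i\<in>S. rk S w i = k} = {i}"
    using i rk_inj[OF assms(1,2)] unfolding inj_on_def by blast
  thus ?thesis by simp
qed

definition swp :: "'a \<Rightarrow> 'a \<Rightarrow> ('a \<Rightarrow> nat) \<Rightarrow> ('a \<Rightarrow> nat)" where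
  "swp i v w = (\<lambda>u. if u = i then w v else if u = v then w i else w u)"

lemma swp_swp: "swp i v (swp i v w) = w"
  by (auto simp: swp_def fun_eq_iff)

lemma swp_rk:
  assumes "finite S" "i \<in> S" "v \<in> S"
  shows "rk S (swp i v w) v = rk S w i"
proof (cases "i = v")
  case True
  hence "swp i v w = w" by (auto simp: swp_def fun_eq_iff)
  thus ?thesis using True by simp
next
  case False
  define \<tau> where "\<tau> u = (if u = i then v else if u = v then i else u)" for u
  have inj\<tau>: "inj \<tau>" unfolding \<tau>_def inj_def by auto
  have sw: "swp i v w u = w (\<tau> u)" for u by (simp add: swp_def \<tau>_def)
  have "{u\<in>S-{v}. swp i v w u < swp i v w v} = \<tau> ` {u\<in>S-{i}. w u < w i}"
  proof (rule set_eqI)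
    fix u
    have tt: "\<And>y. \<tau> (\<tau> y) = y" by (simp add: \<tau>_def)
    have "u \<in> \<tau> ` {u\<in>S-{i}. w u < w i} \<longleftrightarrow> \<tau> u \<in> {u\<in>S-{i}. w u < w i}"
    proof
      assume "u \<in> \<tau> ` {u\<in>S-{i}. w u < w i}"
      then obtain a where "a \<in> {u\<in>S-{i}. w u < w i}" "u = \<tau> a" by blast
      thus "\<tau> u \<in> {u\<in>S-{i}. w u < w i}" using tt by simp
    next
      assume "\<tau> u \<in> {u\<in>S-{i}. w u < w i}"
      hence "\<tau> (\<tau> u) \<in> \<tau> ` {u\<in>S-{i}. w u < w i}" by (rule imageI)
      thus "u \<in> \<tau> ` {u\<in>S-{i}. w u < w i}" using tt by simp
    qed
    also have "\<dots> \<longleftrightarrow> u \<in> {u\<in>S-{v}. swp i v w u < swp i v w v}"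
      using False assms by (auto simp: sw \<tau>_def split: if_splits)
    finally show "u \<in> {u\<in>S-{v}. swp i v w u < swp i v w v} \<longleftrightarrow> u \<in> \<tau> ` {u\<in>S-{i}. w u < w i}" by simp
  qed
  thus ?thesis unfolding rk_def using card_image[OF inj_on_subset[OF inj\<tau>]] by simp
qed

lemma finOm: "finite S \<Longrightarrow> finite B \<Longrightarrow> finite {w\<in>PiE_dflt S 0 (\<lambda>_. B). P w}"
  by (rule finite_subset[OF _ finite_PiE_dflt[of S "\<lambda>_. B"]]) auto

lemma swp_Omega:
  assumes "i \<in> S" "v \<in> S" "w \<in> PiE_dflt S 0 (\<lambda>_. B)"
  shows "swp i v w \<in> PiE_dflt S 0 (\<lambda>_. B)"
  using assms unfolding PiE_dflt_def swp_def by auto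

lemma swp_inj:
  assumes "i \<in> S" "v \<in> S" "inj_on w S"
  shows "inj_on (swp i v w) S"
proof -
  define \<tau> where "\<tau> u = (if u = i then v else if u = v then i else u)" for u
  have sw: "swp i v w = w \<circ> \<tau>" by (auto simp: swp_def \<tau>_def fun_eq_iff)
  have "inj \<tau>" unfolding \<tau>_def inj_def by auto
  moreover have "\<tau> ` S \<subseteq> S" using assms by (auto simp: \<tau>_def)
  ultimately show ?thesis unfolding sw using assms(3)
    by (intro comp_inj_on) (auto intro: inj_on_subset)
qed

lemma card_B_eq:
  assumes "finite S" "i \<in> S" "v \<in> S"
  shows "card {w\<in>PiE_dflt S 0 (\<lambda>_. B). inj_on w S \<and> rk S w i = k} =
         card {w\<in>PiE_dflt S 0 (\<lambda>_. B). inj_on w S \<and> rk S w v = k}"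
proof (rule bij_betw_same_card[of "swp i v"], rule bij_betwI[where g="swp i v"])
  show "swp i v \<in> {w \<in> PiE_dflt S 0 (\<lambda>_. B). inj_on w S \<and> rk S w i = k} \<rightarrow>
    {w \<in> PiE_dflt S 0 (\<lambda>_. B). inj_on w S \<and> rk S w v = k}"
  proof
    fix w assume w: "w \<in> {w \<in> PiE_dflt S 0 (\<lambda>_. B). inj_on w S \<and> rk S w i = k}"
    have "swp i v w \<in> PiE_dflt S 0 (\<lambda>_. B)" using w by (intro swp_Omega[OF assms(2,3)]) simp
    moreover have "inj_on (swp i v w) S" using w by (intro swp_inj[OF assms(2,3)]) simp
    moreover have "rk S (swp i v w) v = k" using w swp_rk[OF assms, of w] by simp
    ultimately show "swp i v w \<in> {w \<in> PiE_dflt S 0 (\<lambda>_. B). inj_on w S \<and> rk S w v = k}" by simp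
  qed
  show "swp i v \<in> {w \<in> PiE_dflt S 0 (\<lambda>_. B). inj_on w S \<and> rk S w v = k} \<rightarrow>
    {w \<in> PiE_dflt S 0 (\<lambda>_. B). inj_on w S \<and> rk S w i = k}"
  proof
    fix w assume w: "w \<in> {w \<in> PiE_dflt S 0 (\<lambda>_. B). inj_on w S \<and> rk S w v = k}"
    have "rk S (swp i v (swp i v w)) v = rk S (swp i v w) i" by (rule swp_rk[OF assms])
    hence "rk S (swp i v w) i = k" using w by (simp add: swp_swp)
    moreover have "swp i v w \<in> PiE_dflt S 0 (\<lambda>_. B)" using w by (intro swp_Omega[OF assms(2,3)]) simp
    moreover have "inj_on (swp i v w) S" using w by (intro swp_inj[OF assms(2,3)]) simp
    ultimately show "swp i v w \<in> {w \<in> PiE_dflt S 0 (\<lambda>_. B). inj_on w S \<and> rk S w i = k}" by simp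
  qed
qed (rule swp_swp)+

lemma sum_B:
  assumes "finite S" "k < card S" "finite B"
  shows "(\<Sum>i\<in>S. card {w\<in>PiE_dflt S 0 (\<lambda>_. B). inj_on w S \<and> rk S w i = k}) =
         card {w\<in>PiE_dflt S 0 (\<lambda>_. B). inj_on w S}"
proof -
  define I where "I = {w\<in>PiE_dflt S 0 (\<lambda>_. B). inj_on w S}"
  have finI: "finite I" unfolding I_def by (rule finOm[OF assms(1,3)])
  have "(\<Sum>i\<in>S. card {w\<in>PiE_dflt S 0 (\<lambda>_. B). inj_on w S \<and> rk S w i = k})
     = (\<Sum>i\<in>S. \<Sum>w\<in>I. if rk S w i = k then 1 else 0)"
  proof (rule sum.cong[OF refl])
    fix i assume "i \<in> S"
    have "{w\<in>PiE_dflt S 0 (\<lambda>_. B). inj_on w S \<and> rk S w i = k} = {w\<in>I. rk S w i = k}"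
      by (auto simp: I_def)
    thus "card {w\<in>PiE_dflt S 0 (\<lambda>_. B). inj_on w S \<and> rk S w i = k} = (\<Sum>w\<in>I. if rk S w i = k then 1 else 0)"
      using finI by (simp add: sum.inter_filter[symmetric])
  qed
  also have "\<dots> = (\<Sum>w\<in>I. \<Sum>i\<in>S. if rk S w i = k then 1 else 0)" by (rule sum.swap)
  also have "\<dots> = (\<Sum>w\<in>I. 1)"
  proof (rule sum.cong[OF refl])
    fix w assume "w \<in> I"
    hence "inj_on w S" by (simp add: I_def)
    hence "card {i\<in>S. rk S w i = k} = 1" by (rule rk_unique[OF assms(1) _ assms(2)])
    have "(\<Sum>i\<in>S. if rk S w i = k then 1 else 0) = (\<Sum>i\<in>{i\<in>S. rk S w i = k}. (1::nat))"
      by (rule sum.inter_filter[of S "\<lambda>_. 1::nat" "\<lambda>i. rk S w i = k", symmetric, OF assms(1)])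
    also have "\<dots> = card {i\<in>S. rk S w i = k}" by simp
    finally show "(\<Sum>i\<in>S. if rk S w i = k then 1 else 0) = (1::nat)" using \<open>card {i\<in>S. rk S w i = k} = 1\<close> by simp
  qed
  also have "\<dots> = card I" by simp
  finally show ?thesis by (simp add: I_def)
qed

lemma card_eq_pair:
  assumes "finite S" "i \<in> S" "j \<in> S" "i \<noteq> j" "finite B"
  shows "card {w\<in>PiE_dflt S 0 (\<lambda>_. B). w i = w j} \<le> card B ^ (card S - 1)"
proof -
  have "card {w\<in>PiE_dflt S 0 (\<lambda>_. B). w i = w j} \<le> card (PiE_dflt (S - {j}) 0 (\<lambda>_. B))"
  proof (rule card_inj_on_le[where f="\<lambda>w. w(j := 0)"])
    show "inj_on (\<lambda>w. w(j := 0)) {w \<in> PiE_dflt S 0 (\<lambda>_. B). w i = w j}"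
    proof (rule inj_onI)
      fix w w' assume w: "w \<in> {w \<in> PiE_dflt S 0 (\<lambda>_. B). w i = w j}"
        and w': "w' \<in> {w \<in> PiE_dflt S 0 (\<lambda>_. B). w i = w j}" and e: "w(j := 0) = w'(j := 0)"
      have "w i = w' i" using fun_cong[OF e, of i] assms(4) by simp
      hence wj: "w j = w' j" using w w' by simp
      show "w = w'"
      proof (rule ext)
        fix u show "w u = w' u"
        proof (cases "u = j")
          case True thus ?thesis using wj by simp
        next
          case False thus ?thesis using fun_cong[OF e, of u] by simp
        qed
      qed
    qed
    show "(\<lambda>w. w(j := 0)) ` {w \<in> PiE_dflt S 0 (\<lambda>_. B). w i = w j} \<subseteq> PiE_dflt (S - {j}) 0 (\<lambda>_. B)"
      by (auto simp: PiE_dflt_def)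
    show "finite (PiE_dflt (S - {j}) 0 (\<lambda>_. B))" using assms by auto
  qed
  also have "\<dots> = card B ^ (card S - 1)"
    using assms by (simp add: card_PiE_dflt)
  finally show ?thesis .
qed

lemma card_noninj:
  assumes "finite S" "finite B"
  shows "card {w\<in>PiE_dflt S 0 (\<lambda>_. B). \<not> inj_on w S} \<le> card S * card S * card B ^ (card S - 1)"
proof -
  have sub: "{w\<in>PiE_dflt S 0 (\<lambda>_. B). \<not> inj_on w S} \<subseteq>
      (\<Union>p\<in>S\<times>S. {w\<in>PiE_dflt S 0 (\<lambda>_. B). fst p \<noteq> snd p \<and> w (fst p) = w (snd p)})"
    unfolding inj_on_def by auto
  have "card {w\<in>PiE_dflt S 0 (\<lambda>_. B). \<not> inj_on w S} \<le>
      card (\<Union>p\<in>S\<times>S. {w\<in>PiE_dflt S 0 (\<lambda>_. B). fst p \<noteq> snd p \<and> w (fst p) = w (snd p)})"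
  proof (rule card_mono[OF _ sub])
    show "finite (\<Union>p\<in>S\<times>S. {w\<in>PiE_dflt S 0 (\<lambda>_. B). fst p \<noteq> snd p \<and> w (fst p) = w (snd p)})"
      by (rule finite_subset[OF _ finite_PiE_dflt[of S "\<lambda>_. B" 0]]) (use assms in auto)
  qed
  also have "\<dots> \<le> (\<Sum>p\<in>S\<times>S. card {w\<in>PiE_dflt S 0 (\<lambda>_. B). fst p \<noteq> snd p \<and> w (fst p) = w (snd p)})"
    by (rule card_UN_le) (use assms in simp)
  also have "\<dots> \<le> (\<Sum>p\<in>S\<times>S. card B ^ (card S - 1))"
  proof (rule sum_mono)
    fix p assume p: "p \<in> S \<times> S"
    show "card {w\<in>PiE_dflt S 0 (\<lambda>_. B). fst p \<noteq> snd p \<and> w (fst p) = w (snd p)} \<le> card B ^ (card S - 1)"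
    proof (cases "fst p = snd p")
      case True thus ?thesis by simp
    next
      case False
      hence "{w\<in>PiE_dflt S 0 (\<lambda>_. B). fst p \<noteq> snd p \<and> w (fst p) = w (snd p)} =
             {w\<in>PiE_dflt S 0 (\<lambda>_. B). w (fst p) = w (snd p)}" by auto
      thus ?thesis using card_eq_pair[OF assms(1) _ _ False assms(2)] p by (auto simp: mem_Times_iff)
    qed
  qed
  also have "\<dots> = card S * card S * card B ^ (card S - 1)" by (simp add: card_cartesian_product)
  finally show ?thesis .
qed

definition lab :: "nat \<Rightarrow> 'a set \<Rightarrow> ('a \<Rightarrow> nat) pmf" where
  "lab M V = Pi_pmf V 0 (\<lambda>_. pmf_of_set {..<M})"

lemma prob_restrict:
  assumes "finite V" "S \<subseteq> V" "M > 0"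
    and P: "\<And>x y. (\<forall>u\<in>S. x u = y u) \<Longrightarrow> P x = P y"
  shows "measure_pmf.prob (lab M V) {x. P x} =
     real (card {w\<in>PiE_dflt S 0 (\<lambda>_. {..<M}). P w}) / real M ^ card S"
proof -
  define g where "g f = (\<lambda>x. if x \<in> S then f x else (0::nat))" for f :: "'a \<Rightarrow> nat"
  have finS: "finite S" using assms finite_subset by blast
  have Pg: "P (g x) = P x" for x by (rule P) (simp add: g_def)
  have "measure_pmf.prob (lab M V) {x. P x} = measure_pmf.prob (lab M V) (g -` {x. P x})"
    using Pg by simp
  also have "\<dots> = measure_pmf.prob (map_pmf g (lab M V)) {x. P x}" by simp
  also have "map_pmf g (lab M V) = Pi_pmf S 0 (\<lambda>_. pmf_of_set {..<M})"
    unfolding lab_def g_def by (rule Pi_pmf_subset[symmetric, OF assms(1,2)])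
  also have "\<dots> = pmf_of_set (PiE_dflt S 0 (\<lambda>_. {..<M}))"
    by (rule Pi_pmf_of_set) (use finS assms(3) in auto)
  also have "measure_pmf.prob \<dots> {x. P x} =
     real (card (PiE_dflt S 0 (\<lambda>_. {..<M}) \<inter> {x. P x})) / real (card (PiE_dflt S 0 (\<lambda>_. {..<M})))"
    by (rule measure_pmf_of_set) (use finS assms(3) in \<open>auto intro!: finite_PiE_dflt\<close>)
  also have "card (PiE_dflt S 0 (\<lambda>_. {..<M})) = M ^ card S"
    using finS by (simp add: card_PiE_dflt)
  also have "PiE_dflt S 0 (\<lambda>_. {..<M}) \<inter> {x. P x} = {w\<in>PiE_dflt S 0 (\<lambda>_. {..<M}). P w}" by auto
  finally show ?thesis by simp
qed

lemma phi_count: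
  assumes "finite S" "v \<in> S"
  shows "card {w\<in>PiE_dflt S 0 (\<lambda>_. {..<M}). card {u\<in>S-{v}. w u + w v + 2 \<le> M} = k} =
         card {w\<in>PiE_dflt S 0 (\<lambda>_. {..<M}). rk S w v = k}"
proof (rule bij_betw_same_card[of "\<lambda>w. w(v := M - 1 - w v)"],
       rule bij_betwI[where g="\<lambda>w. w(v := M - 1 - w v)"])
  have key: "card {u\<in>S-{v}. (w(v := M - 1 - w v)) u < (w(v := M - 1 - w v)) v} =
      card {u\<in>S-{v}. w u + w v + 2 \<le> M}" if "w v < M" for w :: "'a \<Rightarrow> nat"
  proof -
    have "{u\<in>S-{v}. (w(v := M - 1 - w v)) u < (w(v := M - 1 - w v)) v} = {u\<in>S-{v}. w u + w v + 2 \<le> M}"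
      using that by auto
    thus ?thesis by simp
  qed
  show "(\<lambda>w. w(v := M - 1 - w v)) \<in> {w\<in>PiE_dflt S 0 (\<lambda>_. {..<M}). card {u\<in>S-{v}. w u + w v + 2 \<le> M} = k}
     \<rightarrow> {w\<in>PiE_dflt S 0 (\<lambda>_. {..<M}). rk S w v = k}"
  proof
    fix w assume w: "w \<in> {w\<in>PiE_dflt S 0 (\<lambda>_. {..<M}). card {u\<in>S-{v}. w u + w v + 2 \<le> M} = k}"
    hence wv: "w v < M" using assms(2) by (auto simp: PiE_dflt_def)
    have "w(v := M - 1 - w v) \<in> PiE_dflt S 0 (\<lambda>_. {..<M})"
      using w wv assms(2) by (auto simp: PiE_dflt_def)
    moreover have "rk S (w(v := M - 1 - w v)) v = k"
      unfolding rk_def using key[of w, OF wv] w by simp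
    ultimately show "w(v := M - 1 - w v) \<in> {w\<in>PiE_dflt S 0 (\<lambda>_. {..<M}). rk S w v = k}" by simp
  qed
  show "(\<lambda>w. w(v := M - 1 - w v)) \<in> {w\<in>PiE_dflt S 0 (\<lambda>_. {..<M}). rk S w v = k}
     \<rightarrow> {w\<in>PiE_dflt S 0 (\<lambda>_. {..<M}). card {u\<in>S-{v}. w u + w v + 2 \<le> M} = k}"
  proof
    fix w assume w: "w \<in> {w\<in>PiE_dflt S 0 (\<lambda>_. {..<M}). rk S w v = k}"
    hence wv: "w v < M" using assms(2) by (auto simp: PiE_dflt_def)
    define w' where "w' = w(v := M - 1 - w v)"
    have w'v: "w' v < M" "w'(v := M - 1 - w' v) = w" using wv by (auto simp: w'_def)
    have "w' \<in> PiE_dflt S 0 (\<lambda>_. {..<M})"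
      using w wv assms(2) by (auto simp: PiE_dflt_def w'_def)
    moreover have "card {u\<in>S-{v}. w' u + w' v + 2 \<le> M} = k"
    proof -
      have "rk S (w'(v := M - 1 - w' v)) v = k" using w w'v(2) by simp
      thus ?thesis using key[of w', OF w'v(1)] unfolding rk_def by simp
    qed
    ultimately show "w(v := M - 1 - w v) \<in> {w\<in>PiE_dflt S 0 (\<lambda>_. {..<M}). card {u\<in>S-{v}. w u + w v + 2 \<le> M} = k}"
      by (simp add: w'_def)
  qed
next
  fix w assume "w \<in> {w\<in>PiE_dflt S 0 (\<lambda>_. {..<M}). card {u\<in>S-{v}. w u + w v + 2 \<le> M} = k}"
  hence "w v < M" using assms(2) by (auto simp: PiE_dflt_def)
  thus "(w(v := M - 1 - w v))(v := M - 1 - (w(v := M - 1 - w v)) v) = w" by auto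
next
  fix w assume "w \<in> {w\<in>PiE_dflt S 0 (\<lambda>_. {..<M}). rk S w v = k}"
  hence "w v < M" using assms(2) by (auto simp: PiE_dflt_def)
  thus "(w(v := M - 1 - w v))(v := M - 1 - (w(v := M - 1 - w v)) v) = w" by auto
qed

lemma count_bounds:
  assumes "finite S" "v \<in> S" "k < card S" "M > 0"
  defines "m \<equiv> card S"
  shows "real (card {w\<in>PiE_dflt S 0 (\<lambda>_. {..<M}). rk S w v = k}) \<ge> (real M ^ m - real m ^ 2 * real M ^ (m - 1)) / real m"
    and "real (card {w\<in>PiE_dflt S 0 (\<lambda>_. {..<M}). rk S w v = k}) \<le> real M ^ m / real m + real m ^ 2 * real M ^ (m - 1)"
proof -
  define \<Omega> where "\<Omega> = PiE_dflt S 0 (\<lambda>_. {..<M})"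
  have fin\<Omega>: "finite \<Omega>" unfolding \<Omega>_def using assms(1) by (intro finite_PiE_dflt) auto
  define I where "I = {w\<in>\<Omega>. inj_on w S}"
  define NI where "NI = {w\<in>\<Omega>. \<not> inj_on w S}"
  define Bv where "Bv = {w\<in>\<Omega>. inj_on w S \<and> rk S w v = k}"
  define A where "A = {w\<in>\<Omega>. rk S w v = k}"
  have m0: "m > 0" using assms(1,2) m_def by (auto simp: card_gt_0_iff)
  have cI: "card I + card NI = M ^ m"
  proof -
    have "card I + card NI = card (I \<union> NI)"
      by (rule card_Un_disjoint[symmetric]) (auto simp: I_def NI_def intro: finite_subset[OF _ fin\<Omega>])
    also have "I \<union> NI = \<Omega>" by (auto simp: I_def NI_def)
    also have "card \<Omega> = M ^ m" unfolding \<Omega>_def m_def using assms(1) by (simp add: card_PiE_dflt)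
    finally show ?thesis .
  qed
  have cNI: "card NI \<le> m * m * M ^ (m - 1)"
    using card_noninj[OF assms(1), of "{..<M}"] by (simp add: NI_def \<Omega>_def m_def)
  have cB: "m * card Bv = card I"
  proof -
    have "(\<Sum>i\<in>S. card {w\<in>\<Omega>. inj_on w S \<and> rk S w i = k}) = card I"
      unfolding \<Omega>_def I_def by (rule sum_B[OF assms(1,3)]) simp
    moreover have "(\<Sum>i\<in>S. card {w\<in>\<Omega>. inj_on w S \<and> rk S w i = k}) = (\<Sum>i\<in>S. card Bv)"
      unfolding \<Omega>_def Bv_def by (intro sum.cong[OF refl] card_B_eq[OF assms(1) _ assms(2)])
    ultimately show ?thesis by (simp add: m_def)
  qed
  have AB: "card Bv \<le> card A" "card A \<le> card Bv + card NI"
  proof -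
    show "card Bv \<le> card A" unfolding Bv_def A_def by (rule card_mono) (auto intro: finite_subset[OF _ fin\<Omega>])
    have "A \<subseteq> Bv \<union> NI" by (auto simp: A_def Bv_def NI_def)
    hence "card A \<le> card (Bv \<union> NI)" by (intro card_mono) (auto simp: Bv_def NI_def intro: finite_subset[OF _ fin\<Omega>])
    also have "\<dots> \<le> card Bv + card NI" by (rule card_Un_le)
    finally show "card A \<le> card Bv + card NI" .
  qed
  have rI: "real m * real (card Bv) = real (card I)" using cB by (metis of_nat_mult)
  have rNI: "real (card NI) \<le> real m ^ 2 * real M ^ (m - 1)"
    using cNI by (simp add: power2_eq_square) (metis of_nat_le_iff of_nat_mult of_nat_power)
  have rsum: "real (card I) + real (card NI) = real M ^ m" using cI by (metis of_nat_add of_nat_power)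
  have rm: "real m > 0" using m0 by simp
  show "real (card {w\<in>PiE_dflt S 0 (\<lambda>_. {..<M}). rk S w v = k}) \<ge> (real M ^ m - real m ^ 2 * real M ^ (m - 1)) / real m"
  proof -
    have "(real M ^ m - real m ^ 2 * real M ^ (m - 1)) / real m \<le> real (card I) / real m"
      using rsum rNI rm by (intro divide_right_mono) auto
    also have "\<dots> = real (card Bv)" using rI rm by (simp add: field_simps)
    also have "\<dots> \<le> real (card A)" using AB by simp
    finally show ?thesis by (simp add: A_def \<Omega>_def)
  qed
  show "real (card {w\<in>PiE_dflt S 0 (\<lambda>_. {..<M}). rk S w v = k}) \<le> real M ^ m / real m + real m ^ 2 * real M ^ (m - 1)"
  proof -
    have "real (card A) \<le> real (card Bv) + real (card NI)" using AB by linarith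
    also have "real (card Bv) = real (card I) / real m" using rI rm by (simp add: field_simps)
    also have "\<dots> \<le> real M ^ m / real m"
    proof -
      have "real (card I) \<le> real M ^ m" using rsum of_nat_0_le_iff[of "card NI"] by linarith
      thus ?thesis using rm by (intro divide_right_mono) auto
    qed
    finally have "real (card A) \<le> real M ^ m / real m + real (card NI)" by simp
    thus ?thesis using rNI by (simp add: A_def \<Omega>_def)
  qed
qed

lemma meas_fin_PiM:
  fixes f :: "('a \<Rightarrow> nat) \<Rightarrow> bool"
  assumes "finite S"
  shows "f \<in> measurable (PiM S (\<lambda>_. count_space UNIV)) (count_space UNIV)"
proof (subst measurable_count_space_eq2_countable, intro conjI ballI)
  show "f \<in> space (PiM S (\<lambda>_. count_space UNIV)) \<rightarrow> UNIV" by simp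
  fix a :: bool
  have cnt: "countable (space (PiM S (\<lambda>_. count_space (UNIV :: nat set))))"
    unfolding space_PiM using assms by (intro countable_PiE) auto
  show "f -` {a} \<inter> space (PiM S (\<lambda>_. count_space UNIV)) \<in> sets (PiM S (\<lambda>_. count_space UNIV))"
  proof (rule sets.countable)
    show "countable (f -` {a} \<inter> space (PiM S (\<lambda>_. count_space UNIV)))"
      by (rule countable_subset[OF _ cnt]) auto
    fix w assume w: "w \<in> f -` {a} \<inter> space (PiM S (\<lambda>_. count_space UNIV))"
    hence wE: "w \<in> PiE S (\<lambda>_. UNIV)" by (simp add: space_PiM)
    have "{w} = PiE S (\<lambda>i. {w i})"
    proof (rule set_eqI)
      fix z show "z \<in> {w} \<longleftrightarrow> z \<in> PiE S (\<lambda>i. {w i})"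
        using wE by (auto simp: PiE_def extensional_def fun_eq_iff)
    qed
    also have "\<dots> \<in> sets (PiM S (\<lambda>_. count_space UNIV))"
      by (rule sets_PiM_I_finite[OF assms]) simp
    finally show "{w} \<in> sets (PiM S (\<lambda>_. count_space UNIV))" .
  qed
qed

lemma indep_Y:
  assumes G: "simple_graph V E" and C: "C \<subseteq> V"
    and disj: "\<forall>u\<in>C. \<forall>w\<in>C. u \<noteq> w \<longrightarrow> cl E u \<inter> cl E w = {}"
  shows "prob_space.indep_vars (measure_pmf (lab M V)) (\<lambda>_. count_space UNIV)
           (\<lambda>v x. card {u\<in>nbr E v. x u + x v + 2 \<le> M} = k) C"
proof -
  interpret P: prob_space "measure_pmf (lab M V)" by (rule measure_pmf.prob_space_axioms)
  have finV: "finite V" using G by (simp add: simple_graph_def)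
  have ind0: "prob_space.indep_vars (measure_pmf (lab M V)) (\<lambda>_. count_space UNIV) (\<lambda>i f. f i) V"
    unfolding lab_def by (rule indep_vars_Pi_pmf[OF finV])
  have clV: "cl E v \<subseteq> V" if "v \<in> C" for v
    using that C nbr_props(1)[OF G] by (auto simp: cl_def)
  have dfam: "disjoint_family_on (cl E) C" using disj by (auto simp: disjoint_family_on_def)
  have ind1: "prob_space.indep_vars (measure_pmf (lab M V)) (\<lambda>j. PiM (cl E j) (\<lambda>_. count_space UNIV))
      (\<lambda>j \<omega>. restrict (\<lambda>i. \<omega> i) (cl E j)) C"
    by (rule prob_space.indep_vars_restrict[OF measure_pmf.prob_space_axioms ind0 clV dfam])
  have finCl: "finite (cl E v)" for v using nbr_props(3)[OF G] by (simp add: cl_def)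
  have ind2: "prob_space.indep_vars (measure_pmf (lab M V)) (\<lambda>_. count_space UNIV)
      (\<lambda>v \<omega>. (\<lambda>w. card {u\<in>nbr E v. w u + w v + 2 \<le> M} = k) (restrict (\<lambda>i. \<omega> i) (cl E v))) C"
    by (rule prob_space.indep_vars_compose2[OF measure_pmf.prob_space_axioms ind1])
       (rule meas_fin_PiM[OF finCl])
  show ?thesis
  proof (subst prob_space.indep_vars_cong[OF measure_pmf.prob_space_axioms])
    show "C = C" ..
    fix v assume v: "v \<in> C"
    show "(\<lambda>\<omega>. card {u\<in>nbr E v. \<omega> u + \<omega> v + 2 \<le> M} = k) =
          (\<lambda>\<omega>. (\<lambda>w. card {u\<in>nbr E v. w u + w v + 2 \<le> M} = k) (restrict (\<lambda>i. \<omega> i) (cl E v)))"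
    proof (rule ext)
      fix \<omega> :: "'a \<Rightarrow> nat"
      have "{u\<in>nbr E v. restrict (\<lambda>i. \<omega> i) (cl E v) u + restrict (\<lambda>i. \<omega> i) (cl E v) v + 2 \<le> M}
          = {u\<in>nbr E v. \<omega> u + \<omega> v + 2 \<le> M}" by (auto simp: cl_def)
      thus "(card {u\<in>nbr E v. \<omega> u + \<omega> v + 2 \<le> M} = k) =
          (\<lambda>w. card {u\<in>nbr E v. w u + w v + 2 \<le> M} = k) (restrict (\<lambda>i. \<omega> i) (cl E v))" by simp
    qed
    show "count_space UNIV = count_space UNIV" ..
  qed (rule ind2)
qed

lemma prob_D:
  assumes G: "simple_graph V E" "regular V E d" and v: "v \<in> V" and k: "k \<le> d" and M: "M > 0"
  shows "\<bar>measure_pmf.prob (lab M V) {x. card {u\<in>nbr E v. x u + x v + 2 \<le> M} = k} - 1 / real (d+1)\<bar>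
           \<le> real (d+1)^2 / real M"
proof -
  define S where "S = cl E v"
  have finV: "finite V" using G by (simp add: simple_graph_def)
  have SV: "S \<subseteq> V" using v nbr_props(1)[OF G(1)] by (auto simp: S_def cl_def)
  have finS: "finite S" using SV finV finite_subset by blast
  have vS: "v \<in> S" by (simp add: S_def cl_def)
  have nS: "nbr E v = S - {v}" using nbr_props(2)[OF G(1)] by (auto simp: S_def cl_def)
  have cS: "card S = d + 1"
    using card_nbr[OF G v] nbr_props(2,3)[OF G(1)] by (simp add: S_def cl_def)
  have "measure_pmf.prob (lab M V) {x. card {u\<in>nbr E v. x u + x v + 2 \<le> M} = k} =
     real (card {w\<in>PiE_dflt S 0 (\<lambda>_. {..<M}). card {u\<in>nbr E v. w u + w v + 2 \<le> M} = k}) / real M ^ card S"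
  proof (rule prob_restrict[OF finV SV M])
    fix x y :: "'a \<Rightarrow> nat" assume xy: "\<forall>u\<in>S. x u = y u"
    have "{u\<in>nbr E v. x u + x v + 2 \<le> M} = {u\<in>nbr E v. y u + y v + 2 \<le> M}"
      using xy vS nS by auto
    thus "(card {u\<in>nbr E v. x u + x v + 2 \<le> M} = k) = (card {u\<in>nbr E v. y u + y v + 2 \<le> M} = k)" by simp
  qed
  also have "card {w\<in>PiE_dflt S 0 (\<lambda>_. {..<M}). card {u\<in>nbr E v. w u + w v + 2 \<le> M} = k} =
      card {w\<in>PiE_dflt S 0 (\<lambda>_. {..<M}). rk S w v = k}"
    unfolding nS by (rule phi_count[OF finS vS])
  finally have pe: "measure_pmf.prob (lab M V) {x. card {u\<in>nbr E v. x u + x v + 2 \<le> M} = k} =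
      real (card {w\<in>PiE_dflt S 0 (\<lambda>_. {..<M}). rk S w v = k}) / real M ^ (d+1)" by (simp add: cS)
  define c where "c = real (card {w\<in>PiE_dflt S 0 (\<lambda>_. {..<M}). rk S w v = k})"
  have kS: "k < card S" using k cS by simp
  define m where "m = d + 1"
  have lo: "c \<ge> (real M ^ m - real m ^ 2 * real M ^ (m - 1)) / real m"
    using count_bounds(1)[OF finS vS kS M] cS by (simp add: c_def m_def)
  have hi: "c \<le> real M ^ m / real m + real m ^ 2 * real M ^ (m - 1)"
    using count_bounds(2)[OF finS vS kS M] cS by (simp add: c_def m_def)
  have Mp: "real M > 0" using M by simp
  have mp: "real m > 0" by (simp add: m_def)
  have pow: "real M ^ m = real M * real M ^ (m - 1)" by (simp add: m_def)
  have Mm: "real M ^ (m - 1) > 0" using Mp by simp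
  have lo': "c / real M ^ m \<ge> 1 / real m - real m ^ 2 / real M"
  proof -
    have "(real M ^ m - real m ^ 2 * real M ^ (m - 1)) / real m / real M ^ m
        = 1 / real m - real m / real M"
      using Mp mp Mm unfolding pow by (simp add: field_simps power2_eq_square)
    moreover have "(real M ^ m - real m ^ 2 * real M ^ (m - 1)) / real m / real M ^ m \<le> c / real M ^ m"
      using lo Mm Mp by (intro divide_right_mono) auto
    moreover have "real m / real M \<le> real m ^ 2 / real M"
      using Mp mp by (intro divide_right_mono) (auto simp: power2_eq_square m_def)
    ultimately show ?thesis by linarith
  qed
  have hi': "c / real M ^ m \<le> 1 / real m + real m ^ 2 / real M"
  proof -
    have "c / real M ^ m \<le> (real M ^ m / real m + real m ^ 2 * real M ^ (m - 1)) / real M ^ m"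
      using hi Mm Mp by (intro divide_right_mono) auto
    also have "\<dots> = 1 / real m + real m ^ 2 / real M"
      using Mp mp Mm unfolding pow by (simp add: field_simps power2_eq_square)
    finally show ?thesis .
  qed
  show ?thesis using lo' hi' pe unfolding c_def m_def by (simp add: abs_le_iff)
qed

lemma final_arith:
  fixes \<epsilon> n d1 qL \<eta> Sm :: real
  assumes e: "\<epsilon> > 0" "\<epsilon> < 1/3" and n: "n > 0" and d1: "d1 \<ge> 1" and qL: "qL \<ge> 0" "qL \<le> \<epsilon>^2 * n / (3 * d1)"
    and \<eta>: "\<eta> \<ge> 0" "\<eta> \<le> \<epsilon> / (20 * d1)" and Sm: "Sm \<le> n / d1 + n * \<eta>"
  shows "qL + (2*\<epsilon>/5) * Sm + qL / (2*(2*\<epsilon>/5)) + n * \<eta> \<le> \<epsilon> * (n / d1)"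
proof -
  define T where "T = \<epsilon> * (n / d1)"
  have T0: "T \<ge> 0" using e n d1 by (simp add: T_def)
  have q3: "\<epsilon>^2 * n / (3 * d1) = (\<epsilon>/3) * T" by (simp add: T_def power2_eq_square)
  have a1: "qL \<le> T/9"
  proof -
    have "(\<epsilon>/3) * T \<le> (1/9) * T" using e T0 by (intro mult_right_mono) auto
    moreover have "qL \<le> (\<epsilon>/3) * T" using qL(2) q3 by simp
    ultimately show ?thesis by linarith
  qed
  have a2: "qL / (2*(2*\<epsilon>/5)) \<le> 5*T/12"
  proof -
    have "qL / (2*(2*\<epsilon>/5)) \<le> ((\<epsilon>/3) * T) / (2*(2*\<epsilon>/5))"
      using qL q3 e by (intro divide_right_mono) auto
    also have "\<dots> = 5*T/12" using e by (simp add: field_simps)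
    finally show ?thesis .
  qed
  have a4: "n * \<eta> \<le> T/20"
  proof -
    have "n * \<eta> \<le> n * (\<epsilon> / (20 * d1))" using \<eta> n by (intro mult_left_mono) auto
    also have "\<dots> = T/20" by (simp add: T_def mult.commute)
    finally show ?thesis .
  qed
  have a3: "(2*\<epsilon>/5) * Sm \<le> 2*T/5 + T/150"
  proof -
    have "(2*\<epsilon>/5) * Sm \<le> (2*\<epsilon>/5) * (n / d1 + n * \<eta>)" using Sm e by (intro mult_left_mono) auto
    also have "\<dots> = 2*T/5 + (2*\<epsilon>/5) * (n * \<eta>)" by (simp add: T_def algebra_simps)
    also have "(2*\<epsilon>/5) * (n * \<eta>) \<le> (2/15) * (T/20)"
      using e a4 n \<eta> by (intro mult_mono) auto
    finally show ?thesis by simp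
  qed
  show ?thesis using a1 a2 a3 a4 T0 unfolding T_def[symmetric] by linarith
qed

lemma tcond:
  fixes L a \<mu> :: real
  assumes "L \<ge> 0" "a > 0" "\<mu> \<ge> 0"
  shows "L * (2*\<mu> + (L + a*\<mu> + L/(2*a))) \<le> (L + a*\<mu> + L/(2*a))^2"
proof -
  define sv where "sv = a*\<mu> + L/(2*a)"
  have s0: "sv \<ge> 0" using assms by (simp add: sv_def)
  have ss: "sv^2 \<ge> 2*\<mu>*L"
  proof -
    have "0 \<le> (a*\<mu> - L/(2*a))^2" by simp
    also have "(a*\<mu> - L/(2*a))^2 = sv^2 - 2*\<mu>*L"
      using assms by (simp add: sv_def power2_eq_square field_simps)
    finally show ?thesis by simp
  qed
  have e: "(L + sv)^2 - L * (2*\<mu> + (L + sv)) = L * sv + (sv^2 - 2*\<mu>*L)"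
    by (simp add: power2_eq_square algebra_simps)
  have "L * sv \<ge> 0" using s0 assms by simp
  hence "(L + sv)^2 - L * (2*\<mu> + (L + sv)) \<ge> 0" using e ss by linarith
  thus ?thesis by (simp add: sv_def add.assoc)
qed

lemma exists_good:
  fixes N :: "'b pmf"
  assumes "measure_pmf.prob N A < 1"
  shows "\<exists>x\<in>set_pmf N. x \<notin> A"
proof (rule ccontr)
  assume "\<not> (\<exists>x\<in>set_pmf N. x \<notin> A)"
  hence "AE x in measure_pmf N. x \<in> A" by (simp add: AE_measure_pmf_iff)
  hence "measure_pmf.prob N A = 1"
    by (subst measure_pmf.prob_eq_1) auto
  thus False using assms by simp
qed

lemma nbr_Fx:
  fixes x :: "'a \<Rightarrow> nat" and M :: nat
  assumes G: "simple_graph V E"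
  shows "nbr {e\<in>E. (\<Sum>u\<in>e. x u) + 2 \<le> M} v = {u\<in>nbr E v. x u + x v + 2 \<le> M}"
proof (rule set_eqI)
  fix u
  show "u \<in> nbr {e\<in>E. (\<Sum>u\<in>e. x u) + 2 \<le> M} v \<longleftrightarrow> u \<in> {u\<in>nbr E v. x u + x v + 2 \<le> M}"
  proof (cases "u = v")
    case True
    hence "u \<notin> nbr E v" using nbr_props(2)[OF G] by simp
    moreover have "u \<notin> nbr {e\<in>E. (\<Sum>u\<in>e. x u) + 2 \<le> M} v" using True \<open>u \<notin> nbr E v\<close> by (auto simp: nbr_def)
    ultimately show ?thesis by simp
  next
    case False
    thus ?thesis by (auto simp: nbr_def)
  qed
qed

theorem proposition2p4:
  fixes V :: "'a set" and E :: "'a set set" and d n :: nat and \<epsilon> :: real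
  assumes "simple_graph V E"
    and "regular V E d"
    and "card V = n"
    and "0 < \<epsilon>" and "\<epsilon> < 1/3"
    and "real (d+1) * real (d^2+1) * 2 *
           exp (-(1/3) * \<epsilon>^2 * real (n div (d^2+1)) * (1 / real (d+1))) < 1"
  shows "\<exists>F. spanning_subgraph V E F \<and>
           (\<forall>k\<le>d. \<bar>real (mdeg V F k) - real n / real (d+1)\<bar> \<le> \<epsilon> * (real n / real (d+1)))"
proof -
  note G = assms(1,2)
  define q where "q = d^2 + 1"
  define L where "L = (1/3) * \<epsilon>^2 * real (n div q) * (1 / real (d+1))"
  have hyp: "real (d+1) * real q * 2 * exp (-L) < 1" using assms(6) by (simp add: q_def L_def)
  have finV: "finite V" using G by (simp add: simple_graph_def)
  have q1: "q \<ge> 1" by (simp add: q_def)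
  have ndiv: "n div q \<ge> 1"
  proof (rule ccontr)
    assume "\<not> n div q \<ge> 1"
    hence "L = 0" by (simp add: L_def)
    hence "real (d+1) * real q * 2 < 1" using hyp by simp
    moreover have "real (d+1) * real q * 2 \<ge> 1 * 1 * 2" using q1
      by (intro mult_mono) auto
    ultimately show False by simp
  qed
  have npos: "n > 0" using ndiv by (cases n) auto
  have Lpos: "L > 0" using ndiv assms(4) by (simp add: L_def)
  have qL: "real q * L \<le> \<epsilon>^2 * real n / (3 * real (d+1))"
  proof -
    have "q * (n div q) \<le> n" by simp
    hence "real q * real (n div q) \<le> real n" by (metis of_nat_le_iff of_nat_mult)
    hence le: "\<epsilon>^2 * (real q * real (n div q)) \<le> \<epsilon>^2 * real n" by (intro mult_left_mono) auto
    have "real q * L = (\<epsilon>^2 * (real q * real (n div q))) / (3 * real (d+1))" by (simp add: L_def field_simps)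
    also have "\<dots> \<le> (\<epsilon>^2 * real n) / (3 * real (d+1))" using le by (intro divide_right_mono) auto
    finally show ?thesis by simp
  qed
  define M where "M = nat \<lceil>20 * real (d+1)^3 / \<epsilon>\<rceil> + 1"
  have Mpos: "M > 0" by (simp add: M_def)
  have Mbig: "real M \<ge> 20 * real (d+1)^3 / \<epsilon>"
  proof -
    have "20 * real (d+1)^3 / \<epsilon> \<le> real (nat \<lceil>20 * real (d+1)^3 / \<epsilon>\<rceil>)"
      by (meson le_nat_iff of_nat_le_iff real_nat_ceiling_ge)
    thus ?thesis by (simp add: M_def)
  qed
  define \<eta> where "\<eta> = real (d+1)^2 / real M"
  have \<eta>0: "\<eta> \<ge> 0" by (simp add: \<eta>_def)
  have \<eta>le: "\<eta> \<le> \<epsilon> / (20 * real (d+1))"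
  proof -
    have pos: "20 * real (d+1)^3 / \<epsilon> > 0" using assms(4) by simp
    have "\<eta> \<le> real (d+1)^2 / (20 * real (d+1)^3 / \<epsilon>)"
    proof -
      have "0 < real M" using Mpos by simp
      hence "0 < real M * (20 * real (d+1)^3 / \<epsilon>)" using pos by (rule mult_pos_pos)
      thus ?thesis unfolding \<eta>_def using Mbig by (intro divide_left_mono) auto
    qed
    also have "\<dots> = \<epsilon> / (20 * real (d+1))"
    proof -
      obtain r where r: "r = real (d+1)" by blast
      have "r > 0" using r by simp
      hence "r^2 / (20 * r^3 / \<epsilon>) = \<epsilon> / (20 * r)"
        using assms(4) by (simp add: field_simps power2_eq_square power3_eq_cube)
      thus ?thesis using r by simp
    qed
    finally show ?thesis .
  qed
  obtain cf where cf: "\<forall>v\<in>V. cf v < d^2+1"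
    "\<forall>u\<in>V. \<forall>w\<in>V. u \<noteq> w \<and> cf u = cf w \<longrightarrow> cl E u \<inter> cl E w = {}"
    using dist2_coloring[OF G] by (elim exE conjE)
  define C where "C j = {v\<in>V. cf v = j}" for j
  define N where "N = lab M V"
  define D where "D v x = card {u\<in>nbr E v. x u + x v + 2 \<le> M}" for v and x :: "'a \<Rightarrow> nat"
  define p where "p k v = measure_pmf.prob N {x. D v x = k}" for k v
  define \<mu> where "\<mu> j k = (\<Sum>v\<in>C j. p k v)" for j k
  define \<alpha> where "\<alpha> = 2*\<epsilon>/5"
  have \<alpha>0: "\<alpha> > 0" using assms(4) by (simp add: \<alpha>_def)
  define t where "t j k = L + \<alpha> * \<mu> j k + L / (2*\<alpha>)" for j k
  define X where "X j k x = real (card {v\<in>C j. D v x = k})" for j k x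
  define B where "B = (\<lambda>(j,k). {x. t j k \<le> \<bar>X j k x - \<mu> j k\<bar>})"
  have CV: "C j \<subseteq> V" for j by (auto simp: C_def)
  have finC: "finite (C j)" for j using CV finV finite_subset by blast
  have \<mu>0: "\<mu> j k \<ge> 0" for j k by (simp add: \<mu>_def p_def sum_nonneg)
  have pbad: "measure_pmf.prob N (B (j,k)) \<le> 2 * exp (-L)" for j k
  proof -
    have disj: "\<forall>u\<in>C j. \<forall>w\<in>C j. u \<noteq> w \<longrightarrow> cl E u \<inter> cl E w = {}"
      using cf(2) by (auto simp: C_def)
    have ind: "prob_space.indep_vars (measure_pmf N) (\<lambda>_. count_space UNIV) (\<lambda>v x. D v x = k) (C j)"
      unfolding N_def D_def by (rule indep_Y[OF G(1) CV disj])
    have tp: "t j k > 0"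
    proof -
      have "\<alpha> * \<mu> j k \<ge> 0" using \<alpha>0 \<mu>0[of j k] by simp
      moreover have "L / (2*\<alpha>) \<ge> 0" using Lpos \<alpha>0 by simp
      ultimately show ?thesis using Lpos by (simp add: t_def)
    qed
    have cond: "L * (2 * \<mu> j k + t j k) \<le> (t j k)^2"
      unfolding t_def by (rule tcond) (use Lpos \<alpha>0 \<mu>0 in auto)
    have mu_eq: "\<mu> j k = (\<Sum>v\<in>C j. measure_pmf.prob N {x. D v x = k})" by (simp add: \<mu>_def p_def)
    have up: "measure_pmf.prob N {x. t j k \<le> 1 * (real (card {v\<in>C j. D v x = k}) - \<mu> j k)} \<le> exp (-L)"
      by (rule bern_tail[OF finC ind _ tp cond mu_eq]) simp
    have lo: "measure_pmf.prob N {x. t j k \<le> (-1) * (real (card {v\<in>C j. D v x = k}) - \<mu> j k)} \<le> exp (-L)"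
      by (rule bern_tail[OF finC ind _ tp cond mu_eq]) simp
    have "B (j,k) \<subseteq> {x. t j k \<le> 1 * (real (card {v\<in>C j. D v x = k}) - \<mu> j k)} \<union>
                    {x. t j k \<le> (-1) * (real (card {v\<in>C j. D v x = k}) - \<mu> j k)}"
      by (auto simp: B_def X_def abs_if split: if_splits)
    hence "measure_pmf.prob N (B (j,k)) \<le> measure_pmf.prob N ({x. t j k \<le> 1 * (real (card {v\<in>C j. D v x = k}) - \<mu> j k)} \<union>
                    {x. t j k \<le> (-1) * (real (card {v\<in>C j. D v x = k}) - \<mu> j k)})"
      by (intro measure_pmf.finite_measure_mono) auto
    also have "\<dots> \<le> measure_pmf.prob N {x. t j k \<le> 1 * (real (card {v\<in>C j. D v x = k}) - \<mu> j k)} +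
                    measure_pmf.prob N {x. t j k \<le> (-1) * (real (card {v\<in>C j. D v x = k}) - \<mu> j k)}"
      by (rule measure_Un_le) auto
    finally show ?thesis using up lo by simp
  qed
  define I where "I = {..<q} \<times> {..d}"
  have finI: "finite I" by (simp add: I_def)
  have "measure_pmf.prob N (\<Union>ab\<in>I. B ab) \<le> (\<Sum>ab\<in>I. measure_pmf.prob N (B ab))"
    by (rule measure_pmf.finite_measure_subadditive_finite[OF finI]) auto
  also have "\<dots> \<le> (\<Sum>ab\<in>I. 2 * exp (-L))"
    by (rule sum_mono) (use pbad in auto)
  also have "\<dots> = real (d+1) * real q * 2 * exp (-L)"
    by (simp add: I_def card_cartesian_product algebra_simps)
  finally have "measure_pmf.prob N (\<Union>ab\<in>I. B ab) < 1" using hyp by linarith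
  then obtain x where x: "x \<in> set_pmf N" "x \<notin> (\<Union>ab\<in>I. B ab)" using exists_good by blast
  define F where "F = {e\<in>E. (\<Sum>u\<in>e. x u) + 2 \<le> M}"
  show ?thesis
  proof (intro exI[of _ F] conjI allI impI)
    show "spanning_subgraph V E F" by (auto simp: spanning_subgraph_def F_def)
    fix k assume k: "k \<le> d"
    have degF: "degree F v = D v x" for v
    proof -
      have "degree F v = card (nbr F v)" by (rule degree_nbr[OF G(1)]) (auto simp: F_def)
      also have "nbr F v = {u\<in>nbr E v. x u + x v + 2 \<le> M}" unfolding F_def by (rule nbr_Fx[OF G(1)])
      finally show ?thesis by (simp add: D_def)
    qed
    have Vun: "V = (\<Union>j\<in>{..<q}. C j)" using cf(1) by (auto simp: C_def q_def)
    have Cdisj: "\<forall>i\<in>{..<q}. \<forall>j\<in>{..<q}. i \<noteq> j \<longrightarrow> C i \<inter> C j = {}" by (auto simp: C_def)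
    have mdegX: "real (mdeg V F k) = (\<Sum>j<q. X j k x)"
    proof -
      have "{v\<in>V. degree F v = k} = (\<Union>j\<in>{..<q}. {v\<in>C j. D v x = k})"
        using Vun degF by auto
      hence "mdeg V F k = card (\<Union>j\<in>{..<q}. {v\<in>C j. D v x = k})" by (simp add: mdeg_def)
      also have "\<dots> = (\<Sum>j<q. card {v\<in>C j. D v x = k})"
        by (rule card_UN_disjoint) (use finC Cdisj in auto)
      finally show ?thesis by (simp add: X_def)
    qed
    have musum: "(\<Sum>j<q. \<mu> j k) = (\<Sum>v\<in>V. p k v)"
    proof -
      have "(\<Sum>v\<in>V. p k v) = (\<Sum>v\<in>(\<Union>j\<in>{..<q}. C j). p k v)" using Vun by simp
      also have "\<dots> = (\<Sum>j<q. \<Sum>v\<in>C j. p k v)"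
        by (rule sum.UNION_disjoint) (use finC Cdisj in auto)
      finally show ?thesis by (simp add: \<mu>_def)
    qed
    have good: "\<bar>X j k x - \<mu> j k\<bar> < t j k" if "j < q" for j
    proof -
      have "(j,k) \<in> I" using that k by (simp add: I_def)
      hence "x \<notin> B (j,k)" using x(2) by blast
      thus ?thesis by (simp add: B_def)
    qed
    have pb: "\<bar>p k v - 1 / real (d+1)\<bar> \<le> \<eta>" if "v \<in> V" for v
      unfolding p_def N_def D_def \<eta>_def by (rule prob_D[OF G that k Mpos])
    have nd: "real n / real (d+1) = (\<Sum>v\<in>V. 1 / real (d+1))" using assms(3) by simp
    have S1: "\<bar>(\<Sum>j<q. X j k x) - (\<Sum>j<q. \<mu> j k)\<bar> \<le> (\<Sum>j<q. t j k)"
    proof -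
      have "\<bar>(\<Sum>j<q. X j k x) - (\<Sum>j<q. \<mu> j k)\<bar> = \<bar>\<Sum>j<q. X j k x - \<mu> j k\<bar>"
        by (simp add: sum_subtractf)
      also have "\<dots> \<le> (\<Sum>j<q. \<bar>X j k x - \<mu> j k\<bar>)" by (rule sum_abs)
      also have "\<dots> \<le> (\<Sum>j<q. t j k)" by (rule sum_mono) (use good in \<open>auto intro: less_imp_le\<close>)
      finally show ?thesis .
    qed
    have S2: "\<bar>(\<Sum>v\<in>V. p k v) - real n / real (d+1)\<bar> \<le> real n * \<eta>"
    proof -
      have "\<bar>(\<Sum>v\<in>V. p k v) - real n / real (d+1)\<bar> = \<bar>\<Sum>v\<in>V. p k v - 1 / real (d+1)\<bar>"
        by (simp add: nd sum_subtractf assms(3))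
      also have "\<dots> \<le> (\<Sum>v\<in>V. \<bar>p k v - 1 / real (d+1)\<bar>)" by (rule sum_abs)
      also have "\<dots> \<le> (\<Sum>v\<in>V. \<eta>)" by (rule sum_mono) (use pb in auto)
      also have "\<dots> = real n * \<eta>" using assms(3) by simp
      finally show ?thesis .
    qed
    have S3: "(\<Sum>j<q. t j k) = real q * L + \<alpha> * (\<Sum>v\<in>V. p k v) + real q * L / (2*\<alpha>)"
      by (simp add: t_def sum.distrib sum_distrib_left[symmetric] musum)
    have Smb: "(\<Sum>v\<in>V. p k v) \<le> real n / real (d+1) + real n * \<eta>" using S2 by linarith
    have fa: "real q * L + \<alpha> * (\<Sum>v\<in>V. p k v) + real q * L / (2*\<alpha>) + real n * \<eta>
        \<le> \<epsilon> * (real n / real (d+1))"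
      unfolding \<alpha>_def
      by (rule final_arith[OF assms(4,5) _ _ _ qL \<eta>0 \<eta>le Smb]) (use npos Lpos in auto)
    have "\<bar>real (mdeg V F k) - real n / real (d+1)\<bar> \<le>
        \<bar>(\<Sum>j<q. X j k x) - (\<Sum>j<q. \<mu> j k)\<bar> + \<bar>(\<Sum>v\<in>V. p k v) - real n / real (d+1)\<bar>"
      unfolding mdegX musum by linarith
    also have "\<dots> \<le> real q * L + \<alpha> * (\<Sum>v\<in>V. p k v) + real q * L / (2*\<alpha>) + real n * \<eta>"
      using S1 S2 S3 by linarith
    also have "\<dots> \<le> \<epsilon> * (real n / real (d+1))" by (rule fa)
    finally show "\<bar>real (mdeg V F k) - real n / real (d+1)\<bar> \<le> \<epsilon> * (real n / real (d+1))" .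
  qed
qed

end
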